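(* Let $P$ be a 6-stack of rank $n$ and let $Q$ be a retract of $P$ that is a 4-tower, such that $\#(P(0)\cap Q(0))=2$, where $Q(0)$ is the set of minimal elements of $Q$. Then $n\ge 3$ and the poset $P(3,n)$ has a retract that is a 4-tower.
   Context: All posets are finite. For a poset $P$ and $p\in P$, the rank $r(p)$ of $p$ is the largest $m$ such that there is a chain $p_0<\dots<p_m=p$ in $P$. $P$ is ranked of rank $r(P)$ if every maximal chain has exactly $r(P)+1$ elements. For $0\le i\le j$, $P(i,j)=\{p\in P:i\le r(p)\le j\}$, $P(i)=P(i,i)$ (induced order). A subset $Q\subseteq P$ (induced order) is a retract of $P$ if there is an order-preserving $f:P\to Q$ with $f(q)=q$ for all $q\in Q$. The 6-crown $C_6$ is the poset on $\{x_0,x_1,x_2,y_0,y_1,y_2\}$ whose only strict comparabilities are $x_0<y_0>x_1<y_1>x_2<y_2>x_0$. A 6-stack is a ranked poset $P$ of rank $n\ge1$ such that $P(i,i+1)\cong C_6$ for each $0\le i<n$. The ordinal sum of posets $P_1,\dots,P_k$ ($k\ge1$) is their disjoint union ordered by the orders of the $P_i$ together with $p<q$ whenever $p\in P_i,q\in P_j,i<j$. A 4-tower is an ordinal sum of one or more two-element antichains. *)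

theory Defs
  imports Main
begin

text \<open>A finite poset is a carrier set together with a relation le that is a
partial order on the carrier. Subposets carry the induced order, i.e. the same
relation restricted to a smaller carrier.\<close>

definition poset_on :: "'a set \<Rightarrow> ('a \<Rightarrow> 'a \<Rightarrow> bool) \<Rightarrow> bool" where
  "poset_on P le \<longleftrightarrow> finite P \<and>
     (\<forall>x\<in>P. le x x) \<and>
     (\<forall>x\<in>P. \<forall>y\<in>P. le x y \<and> le y x \<longrightarrow> x = y) \<and>
     (\<forall>x\<in>P. \<forall>y\<in>P. \<forall>z\<in>P. le x y \<and> le y z \<longrightarrow> le x z)"

definition strict :: "('a \<Rightarrow> 'a \<Rightarrow> bool) \<Rightarrow> 'a \<Rightarrow> 'a \<Rightarrow> bool" where
  "strict le x y \<longleftrightarrow> le x y \<and> x \<noteq> y"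

definition prank :: "'a set \<Rightarrow> ('a \<Rightarrow> 'a \<Rightarrow> bool) \<Rightarrow> 'a \<Rightarrow> nat" where
  "prank P le p = Max {m. \<exists>xs. length xs = Suc m \<and> set xs \<subseteq> P \<and>
       sorted_wrt (strict le) xs \<and> last xs = p}"

definition is_chain :: "'a set \<Rightarrow> ('a \<Rightarrow> 'a \<Rightarrow> bool) \<Rightarrow> 'a set \<Rightarrow> bool" where
  "is_chain P le C \<longleftrightarrow> C \<subseteq> P \<and> (\<forall>x\<in>C. \<forall>y\<in>C. le x y \<or> le y x)"

definition maximal_chain :: "'a set \<Rightarrow> ('a \<Rightarrow> 'a \<Rightarrow> bool) \<Rightarrow> 'a set \<Rightarrow> bool" where
  "maximal_chain P le C \<longleftrightarrow> is_chain P le C \<and>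
     (\<forall>D. is_chain P le D \<and> C \<subseteq> D \<longrightarrow> D = C)"

definition ranked :: "'a set \<Rightarrow> ('a \<Rightarrow> 'a \<Rightarrow> bool) \<Rightarrow> nat \<Rightarrow> bool" where
  "ranked P le r \<longleftrightarrow> (\<forall>C. maximal_chain P le C \<longrightarrow> card C = Suc r)"

definition levels :: "'a set \<Rightarrow> ('a \<Rightarrow> 'a \<Rightarrow> bool) \<Rightarrow> nat \<Rightarrow> nat \<Rightarrow> 'a set" where
  "levels P le i j = {p\<in>P. i \<le> prank P le p \<and> prank P le p \<le> j}"

definition order_iso :: "'a set \<Rightarrow> ('a \<Rightarrow> 'a \<Rightarrow> bool) \<Rightarrow> 'b set \<Rightarrow> ('b \<Rightarrow> 'b \<Rightarrow> bool) \<Rightarrow> bool" where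
  "order_iso A leA B leB \<longleftrightarrow> (\<exists>f. bij_betw f A B \<and>
      (\<forall>x\<in>A. \<forall>y\<in>A. leA x y \<longleftrightarrow> leB (f x) (f y)))"

text \<open>The 6-crown on {0..5}: x_i = i, y_i = 3+i, with
  x0 < y0 > x1 < y1 > x2 < y2 > x0.\<close>
definition C6 :: "nat set" where
  "C6 = {0..5}"

definition C6_le :: "nat \<Rightarrow> nat \<Rightarrow> bool" where
  "C6_le a b \<longleftrightarrow> a = b \<or> (a, b) \<in> {(0,3),(1,3),(1,4),(2,4),(2,5),(0,5)}"

definition six_stack :: "'a set \<Rightarrow> ('a \<Rightarrow> 'a \<Rightarrow> bool) \<Rightarrow> nat \<Rightarrow> bool" where
  "six_stack P le n \<longleftrightarrow> poset_on P le \<and> n \<ge> 1 \<and> ranked P le n \<and>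
     (\<forall>i<n. order_iso (levels P le i (Suc i)) le C6 C6_le)"

definition retract :: "'a set \<Rightarrow> ('a \<Rightarrow> 'a \<Rightarrow> bool) \<Rightarrow> 'a set \<Rightarrow> bool" where
  "retract P le Q \<longleftrightarrow> Q \<subseteq> P \<and> (\<exists>f. f ` P \<subseteq> Q \<and>
     (\<forall>x\<in>P. \<forall>y\<in>P. le x y \<longrightarrow> le (f x) (f y)) \<and> (\<forall>q\<in>Q. f q = q))"

text \<open>Q (with induced order) is a 4-tower, i.e. (isomorphic to) an ordinal sum of
k \<ge> 1 two-element antichains: Q splits into k blocks g = 0..k-1 of exactly two
elements each, and x \<le> y iff x = y or x lies in an earlier block than y.\<close>
definition four_tower :: "'a set \<Rightarrow> ('a \<Rightarrow> 'a \<Rightarrow> bool) \<Rightarrow> bool" where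
  "four_tower Q le \<longleftrightarrow> (\<exists>k::nat. \<exists>g. k \<ge> 1 \<and> g ` Q \<subseteq> {0..<k} \<and>
     (\<forall>i<k. card {q\<in>Q. g q = i} = 2) \<and>
     (\<forall>x\<in>Q. \<forall>y\<in>Q. le x y \<longleftrightarrow> (x = y \<or> g x < g y)))"

end

theory Submission
  imports Defs
begin


lemma sorted_strict_distinct: "sorted_wrt (strict le) xs \<Longrightarrow> distinct xs"
  by (induction xs) (auto simp: strict_def)

lemma sorted_last: "sorted_wrt R xs \<Longrightarrow> xs \<noteq> [] \<Longrightarrow> e \<in> set xs \<Longrightarrow> e = last xs \<or> R e (last xs)"
  by (induction xs) auto

lemma sorted_comp: "sorted_wrt R xs \<Longrightarrow> x \<in> set xs \<Longrightarrow> y \<in> set xs \<Longrightarrow> x = y \<or> R x y \<or> R y x"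
  by (induction xs) auto

lemma chainset_finite:
  assumes "finite S"
  shows "finite {m. \<exists>xs. length xs = Suc m \<and> set xs \<subseteq> S \<and> sorted_wrt (strict le) xs \<and> last xs = p}"
proof (rule finite_subset[of _ "{..<card S}"])
  show "{m. \<exists>xs. length xs = Suc m \<and> set xs \<subseteq> S \<and> sorted_wrt (strict le) xs \<and> last xs = p} \<subseteq> {..<card S}"
  proof
    fix m assume "m \<in> {m. \<exists>xs. length xs = Suc m \<and> set xs \<subseteq> S \<and> sorted_wrt (strict le) xs \<and> last xs = p}"
    then obtain xs where xs: "length xs = Suc m" "set xs \<subseteq> S" "sorted_wrt (strict le) xs" by blast
    have "card (set xs) = length xs" using sorted_strict_distinct[OF xs(3)] by (simp add: distinct_card)
    moreover have "card (set xs) \<le> card S" using xs(2) assms by (simp add: card_mono)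
    ultimately show "m \<in> {..<card S}" using xs(1) by simp
  qed
qed simp

lemma prank_ge:
  assumes "finite S" "length xs = Suc m" "set xs \<subseteq> S" "sorted_wrt (strict le) xs" "last xs = p"
  shows "m \<le> prank S le p"
  unfolding prank_def
  by (rule Max_ge[OF chainset_finite[OF assms(1)]]) (use assms in blast)

lemma prank_wit:
  assumes "finite S" "p \<in> S"
  shows "\<exists>xs. length xs = Suc (prank S le p) \<and> set xs \<subseteq> S \<and> sorted_wrt (strict le) xs \<and> last xs = p"
proof -
  have ne: "{m. \<exists>xs. length xs = Suc m \<and> set xs \<subseteq> S \<and> sorted_wrt (strict le) xs \<and> last xs = p} \<noteq> {}"
    using assms(2) by (intro exI[of _ 0] notI) (auto dest!: spec[of _ "[p]"] simp: subset_iff)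
  show ?thesis
    using Max_in[OF chainset_finite[OF assms(1)] ne] unfolding prank_def by blast
qed

lemma poset_props:
  assumes "poset_on S le"
  shows "finite S" "x \<in> S \<Longrightarrow> le x x"
    "x \<in> S \<Longrightarrow> y \<in> S \<Longrightarrow> le x y \<Longrightarrow> le y x \<Longrightarrow> x = y"
    "x \<in> S \<Longrightarrow> y \<in> S \<Longrightarrow> z \<in> S \<Longrightarrow> le x y \<Longrightarrow> le y z \<Longrightarrow> le x z"
  using assms unfolding poset_on_def by blast+

lemma rank_lt:
  assumes po: "poset_on S le" and "x \<in> S" "y \<in> S" "le x y" "x \<noteq> y"
  shows "prank S le x < prank S le y"
proof -
  note P = poset_props[OF po]
  obtain xs where xs: "length xs = Suc (prank S le x)" "set xs \<subseteq> S" "sorted_wrt (strict le) xs" "last xs = x"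
    using prank_wit[OF P(1) assms(2)] by blast
  have "\<forall>e\<in>set xs. strict le e y"
  proof
    fix e assume e: "e \<in> set xs"
    have "xs \<noteq> []" using xs(1) by auto
    then have "e = x \<or> strict le e x" using sorted_last[OF xs(3) _ e] xs(4) by auto
    then have lex: "le e x" and eS: "e \<in> S" using e xs(2) P(2)[OF assms(2)] by (auto simp: strict_def)
    have "le e y" using P(4)[OF eS assms(2,3) lex assms(4)] .
    moreover have "e \<noteq> y"
      using P(3)[OF assms(2,3) assms(4)] lex assms(5) by auto
    ultimately show "strict le e y" by (simp add: strict_def)
  qed
  then have "sorted_wrt (strict le) (xs @ [y])" using xs(3) by (simp add: sorted_wrt_append)
  then have "Suc (prank S le x) \<le> prank S le y"
    by (intro prank_ge[OF P(1), of "xs @ [y]"]) (use xs assms(3) in auto)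
  then show ?thesis by simp
qed

lemma rank_down1:
  assumes po: "poset_on S le" and "p \<in> S" "prank S le p = Suc m"
  shows "\<exists>w\<in>S. le w p \<and> w \<noteq> p \<and> prank S le w = m"
proof -
  note P = poset_props[OF po]
  obtain xs where xs: "length xs = Suc (Suc m)" "set xs \<subseteq> S" "sorted_wrt (strict le) xs" "last xs = p"
    using prank_wit[OF P(1) assms(2), of le] assms(3) by auto
  define ys where "ys = butlast xs"
  have xsys: "xs = ys @ [p]" using xs(1,4) unfolding ys_def
    by (metis append_butlast_last_id list.size(3) nat.distinct(1))
  have ly: "length ys = Suc m" using xs(1) by (simp add: ys_def)
  then have yne: "ys \<noteq> []" by auto
  define w where "w = last ys"
  have wy: "w \<in> set ys" using yne by (simp add: w_def)
  have sy: "sorted_wrt (strict le) ys" and sw: "strict le w p"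
    using xs(3) wy unfolding xsys by (auto simp: sorted_wrt_append)
  have wS: "w \<in> S" using wy xs(2) xsys by auto
  have "m \<le> prank S le w" by (rule prank_ge[OF P(1) ly]) (use xs(2) xsys sy w_def in auto)
  moreover have "prank S le w < prank S le p"
    using rank_lt[OF po wS assms(2)] sw by (simp add: strict_def)
  ultimately show ?thesis using wS sw assms(3) by (auto simp: strict_def)
qed

lemma rank_down:
  assumes po: "poset_on S le" and "p \<in> S" "j \<le> prank S le p"
  shows "\<exists>w\<in>S. le w p \<and> prank S le w = j"
  using assms(2,3)
proof (induction "prank S le p - j" arbitrary: p)
  case 0
  then show ?case using poset_props(2)[OF po] by (intro bexI[of _ p]) auto
next
  case (Suc d)
  then obtain m where m: "prank S le p = Suc m" by (cases "prank S le p") auto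
  obtain w where w: "w \<in> S" "le w p" "w \<noteq> p" "prank S le w = m" using rank_down1[OF po Suc.prems(1) m] by blast
  have "d = prank S le w - j" "j \<le> prank S le w" using Suc.hyps(2) Suc.prems m w by auto
  then obtain v where "v \<in> S" "le v w" "prank S le v = j" using Suc.hyps(1) w(1) by blast
  then show ?case using poset_props(4)[OF po \<open>v \<in> S\<close> w(1) Suc.prems(1)] w(2) by blast
qed

lemma chain_extend:
  assumes "finite S" "is_chain S le C"
  shows "\<exists>D. maximal_chain S le D \<and> C \<subseteq> D"
proof -
  let ?A = "{D. is_chain S le D \<and> C \<subseteq> D}"
  have fin: "finite ?A" by (rule finite_subset[of _ "Pow S"]) (use assms(1) in \<open>auto simp: is_chain_def\<close>)
  have ne: "?A \<noteq> {}" using assms(2) by auto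
  have "Max (card ` ?A) \<in> card ` ?A" using fin ne by (intro Max_in) auto
  then obtain D where D0: "D \<in> ?A" "card D = Max (card ` ?A)" by auto
  have D: "D \<in> ?A" "\<forall>D'\<in>?A. card D' \<le> card D"
    using D0 fin by auto
  have "maximal_chain S le D"
    unfolding maximal_chain_def
  proof (intro conjI allI impI)
    show "is_chain S le D" using D by auto
    fix D' assume "is_chain S le D' \<and> D \<subseteq> D'"
    then have "D' \<in> ?A" "D \<subseteq> D'" "finite D'" using D(1) assms(1) by (auto simp: is_chain_def intro: finite_subset)
    then have "card D' \<le> card D" using D(2) by blast
    then show "D' = D" using card_seteq[OF \<open>finite D'\<close> \<open>D \<subseteq> D'\<close>] by simp
  qed
  then show ?thesis using D by auto
qed

lemma rank_le_n:
  assumes po: "poset_on S le" and rk: "ranked S le n" and "p \<in> S"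
  shows "prank S le p \<le> n"
proof -
  note P = poset_props[OF po]
  obtain xs where xs: "length xs = Suc (prank S le p)" "set xs \<subseteq> S" "sorted_wrt (strict le) xs" "last xs = p"
    using prank_wit[OF P(1) assms(3)] by blast
  have ch: "is_chain S le (set xs)" unfolding is_chain_def
  proof (intro conjI ballI)
    fix x y assume "x \<in> set xs" "y \<in> set xs"
    then show "le x y \<or> le y x" using sorted_comp[OF xs(3)] xs(2) P(2) by (fastforce simp: strict_def)
  qed (use xs in auto)
  obtain D where D: "maximal_chain S le D" "set xs \<subseteq> D" using chain_extend[OF P(1) ch] by blast
  have "card D = Suc n" using rk D(1) by (simp add: ranked_def)
  moreover have "finite D" using D(1) P(1) by (auto simp: maximal_chain_def is_chain_def intro: finite_subset)
  then have "card (set xs) \<le> card D" using D(2) by (simp add: card_mono)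
  moreover have "card (set xs) = Suc (prank S le p)"
    using sorted_strict_distinct[OF xs(3)] xs(1) by (simp add: distinct_card)
  ultimately show ?thesis by simp
qed



lemma bij_ex1:
  assumes "bij_betw h A K"
  shows "(\<exists>!x. x \<in> A \<and> Q (h x)) \<longleftrightarrow> (\<exists>!k. k \<in> K \<and> Q k)"
proof -
  have inj: "inj_on h A" and img: "h ` A = K" using assms by (auto simp: bij_betw_def)
  show ?thesis
  proof
    assume "\<exists>!x. x \<in> A \<and> Q (h x)"
    then obtain x where x: "x \<in> A" "Q (h x)" and u: "\<And>x'. x' \<in> A \<Longrightarrow> Q (h x') \<Longrightarrow> x' = x" by blast
    show "\<exists>!k. k \<in> K \<and> Q k"
    proof (rule ex1I[of _ "h x"])
      show "h x \<in> K \<and> Q (h x)" using x img by blast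
      fix k assume k: "k \<in> K \<and> Q k"
      then obtain x' where "x' \<in> A" "k = h x'" using img by blast
      then show "k = h x" using u k by blast
    qed
  next
    assume "\<exists>!k. k \<in> K \<and> Q k"
    then obtain k where k: "k \<in> K" "Q k" and u: "\<And>k'. k' \<in> K \<Longrightarrow> Q k' \<Longrightarrow> k' = k" by blast
    obtain x where x: "x \<in> A" "k = h x" using img k(1) by blast
    show "\<exists>!x. x \<in> A \<and> Q (h x)"
    proof (rule ex1I[of _ x])
      show "x \<in> A \<and> Q (h x)" using x k by blast
      fix x' assume x': "x' \<in> A \<and> Q (h x')"
      then have "h x' = h x" using u img x by blast
      then show "x' = x" using inj x x' by (meson inj_on_def)
    qed
  qed
qed

lemma crown_facts:
  assumes bij: "bij_betw h (A \<union> B) {0..5::nat}" and disj: "A \<inter> B = {}"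
    and hA: "h ` A \<subseteq> {0,1,2}" and hB: "h ` B \<subseteq> {3,4,5}"
    and ord: "\<forall>x\<in>A\<union>B. \<forall>y\<in>A\<union>B. le x y \<longleftrightarrow> C6_le (h x) (h y)"
  shows "card A = 3" "card B = 3" "\<And>y. y\<in>B \<Longrightarrow> \<exists>!x. x\<in>A \<and> \<not> le x y"
    "\<And>x. x \<in> A \<Longrightarrow> \<exists>!y. y\<in>B \<and> \<not> le x y"
proof -
  have img: "h ` A \<union> h ` B = {0..5}" using bij by (auto simp: bij_betw_def)
  have iA: "h ` A = {0,1,2}"
  proof
    show "{0, 1, 2} \<subseteq> h ` A"
    proof
      fix k :: nat assume k: "k \<in> {0,1,2}"
      then have "k \<in> h ` A \<union> h ` B" using img by auto
      then show "k \<in> h ` A" using hB k by auto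
    qed
  qed (use hA in auto)
  have iB: "h ` B = {3,4,5}"
  proof
    show "{3,4,5} \<subseteq> h ` B"
    proof
      fix k :: nat assume k: "k \<in> {3,4,5}"
      then have "k \<in> h ` A \<union> h ` B" using img by auto
      then show "k \<in> h ` B" using hA k by auto
    qed
  qed (use hB in auto)
  have injA: "inj_on h A" and injB: "inj_on h B" using bij by (auto simp: bij_betw_def inj_on_def)
  have bA: "bij_betw h A {0,1,2}" using injA iA by (simp add: bij_betw_def)
  have bB: "bij_betw h B {3,4,5}" using injB iB by (simp add: bij_betw_def)
  show "card A = 3" using bij_betw_same_card[OF bA] by simp
  show "card B = 3" using bij_betw_same_card[OF bB] by simp
  show "\<exists>!x. x\<in>A \<and> \<not> le x y" if y: "y \<in> B" for y
  proof -
    have "(\<exists>!x. x\<in>A \<and> \<not> le x y) \<longleftrightarrow> (\<exists>!x. x\<in>A \<and> \<not> C6_le (h x) (h y))"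
      by (rule arg_cong[where f = Ex1], rule ext) (use ord y in auto)
    also have "\<dots> \<longleftrightarrow> (\<exists>!k. k \<in> {0,1,2} \<and> \<not> C6_le k (h y))"
      by (rule bij_ex1[OF bA])
    also have "\<dots>"
    proof -
      have "h y = 3 \<or> h y = 4 \<or> h y = 5" using hB y by auto
      then show ?thesis
      proof (elim disjE)
        assume e: "h y = 3" show ?thesis unfolding e by (rule ex1I[of _ 2]) (auto simp: C6_le_def)
      next
        assume e: "h y = 4" show ?thesis unfolding e by (rule ex1I[of _ 0]) (auto simp: C6_le_def)
      next
        assume e: "h y = 5" show ?thesis unfolding e by (rule ex1I[of _ 1]) (auto simp: C6_le_def)
      qed
    qed
    finally show ?thesis .
  qed
  show "\<exists>!y. y\<in>B \<and> \<not> le x y" if x: "x \<in> A" for x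
  proof -
    have "(\<exists>!y. y\<in>B \<and> \<not> le x y) \<longleftrightarrow> (\<exists>!y. y\<in>B \<and> \<not> C6_le (h x) (h y))"
      by (rule arg_cong[where f = Ex1], rule ext) (use ord x in auto)
    also have "\<dots> \<longleftrightarrow> (\<exists>!k. k \<in> {3,4,5} \<and> \<not> C6_le (h x) k)"
      by (rule bij_ex1[OF bB, where Q = "\<lambda>k. \<not> C6_le (h x) k"])
    also have "\<dots>"
    proof -
      have "h x = 0 \<or> h x = 1 \<or> h x = 2" using hA x by auto
      then show ?thesis
      proof (elim disjE)
        assume e: "h x = 0" show ?thesis unfolding e by (rule ex1I[of _ 4]) (auto simp: C6_le_def)
      next
        assume e: "h x = 1" show ?thesis unfolding e by (rule ex1I[of _ 5]) (auto simp: C6_le_def)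
      next
        assume e: "h x = 2" show ?thesis unfolding e by (rule ex1I[of _ 3]) (auto simp: C6_le_def)
      qed
    qed
    finally show ?thesis .
  qed
qed



lemma card3_other:
  assumes "card A = 3"
  shows "\<exists>y\<in>A. y \<noteq> u \<and> y \<noteq> v"
proof (rule ccontr)
  assume "\<not> ?thesis"
  then have "A \<subseteq> {u, v}" by auto
  then have "card A \<le> card {u, v}" by (simp add: card_mono)
  also have "\<dots> \<le> 2" by (simp add: card_insert_le_m1)
  finally show False using assms by simp
qed

locale S6 =
  fixes P :: "'a set" and le :: "'a \<Rightarrow> 'a \<Rightarrow> bool" and n :: nat
  assumes ss: "six_stack P le n"
begin

abbreviation "r \<equiv> prank P le"

definition L where "L i = {p \<in> P. r p = i}"

lemma po: "poset_on P le" and n1: "n \<ge> 1" and rk: "ranked P le n"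
  using ss by (auto simp: six_stack_def)

lemma finP: "finite P" using poset_props(1)[OF po] .
lemma refl: "x \<in> P \<Longrightarrow> le x x" using poset_props(2)[OF po] .
lemma antisym: "x \<in> P \<Longrightarrow> y \<in> P \<Longrightarrow> le x y \<Longrightarrow> le y x \<Longrightarrow> x = y" using poset_props(3)[OF po] .
lemma trans: "x \<in> P \<Longrightarrow> y \<in> P \<Longrightarrow> z \<in> P \<Longrightarrow> le x y \<Longrightarrow> le y z \<Longrightarrow> le x z" using poset_props(4)[OF po] .

lemma rlt: "x \<in> P \<Longrightarrow> y \<in> P \<Longrightarrow> le x y \<Longrightarrow> x \<noteq> y \<Longrightarrow> r x < r y"
  using rank_lt[OF po] .

lemma rle: "x \<in> P \<Longrightarrow> y \<in> P \<Longrightarrow> le x y \<Longrightarrow> r x \<le> r y"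
  using rlt by fastforce

lemma same: "x \<in> P \<Longrightarrow> y \<in> P \<Longrightarrow> le x y \<Longrightarrow> r y \<le> r x \<Longrightarrow> x = y"
  using rlt by fastforce

lemma rn: "p \<in> P \<Longrightarrow> r p \<le> n"
  using rank_le_n[OF po rk] .

lemma down: "p \<in> P \<Longrightarrow> j \<le> r p \<Longrightarrow> \<exists>w\<in>P. le w p \<and> r w = j"
  using rank_down[OF po] .

lemma LP: "x \<in> L i \<Longrightarrow> x \<in> P" and Lr: "x \<in> L i \<Longrightarrow> r x = i"
  by (auto simp: L_def)

lemma inL: "x \<in> P \<Longrightarrow> r x = i \<Longrightarrow> x \<in> L i"
  by (auto simp: L_def)

lemma crown:
  assumes "i < n"
  shows "card (L i) = 3 \<and> card (L (Suc i)) = 3 \<and> (\<forall>y\<in>L (Suc i). \<exists>!x. x \<in> L i \<and> \<not> le x y)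
     \<and> (\<forall>x\<in>L i. \<exists>!y. y \<in> L (Suc i) \<and> \<not> le x y)"
proof -
  have oi: "order_iso (levels P le i (Suc i)) le C6 C6_le" using ss assms by (auto simp: six_stack_def)
  have S: "levels P le i (Suc i) = L i \<union> L (Suc i)" by (auto simp: levels_def L_def)
  obtain h where h: "bij_betw h (L i \<union> L (Suc i)) {0..5}"
    and ord: "\<forall>x\<in>L i \<union> L (Suc i). \<forall>y\<in>L i \<union> L (Suc i). le x y \<longleftrightarrow> C6_le (h x) (h y)"
    using oi unfolding order_iso_def S C6_def by blast
  have inj: "inj_on h (L i \<union> L (Suc i))" and img: "h ` (L i \<union> L (Suc i)) = {0..5}"
    using h by (auto simp: bij_betw_def)
  have disj: "L i \<inter> L (Suc i) = {}" by (auto simp: L_def)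
  have hB: "h ` L (Suc i) \<subseteq> {3,4,5}"
  proof
    fix k assume "k \<in> h ` L (Suc i)"
    then obtain y where y: "y \<in> L (Suc i)" "k = h y" by blast
    obtain w where w: "w \<in> P" "le w y" "r w = i" using down[of y i] y by (auto simp: L_def)
    have wL: "w \<in> L i" using w by (simp add: L_def)
    have "w \<noteq> y" using w y by (auto simp: L_def)
    then have "h w \<noteq> h y" using inj wL y by (auto simp: inj_on_def)
    moreover have "C6_le (h w) (h y)" using ord wL y w(2) by blast
    ultimately show "k \<in> {3,4,5}" using y(2) by (auto simp: C6_le_def)
  qed
  have hA: "h ` L i \<subseteq> {0,1,2}"
  proof
    fix k assume "k \<in> h ` L i"
    then obtain x where x: "x \<in> L i" "k = h x" by blast
    have k5: "k \<in> {0..5}" using img x by auto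
    show "k \<in> {0,1,2}"
    proof (rule ccontr)
      assume "k \<notin> {0,1,2}"
      then have k3: "k = 3 \<or> k = 4 \<or> k = 5" using k5 by auto
      define j :: nat where "j = (if k = 3 then 0 else if k = 4 then 1 else 2)"
      have j5: "j \<in> {0..5}" by (simp add: j_def)
      have cj: "C6_le j k" "j \<noteq> k" using k3 by (auto simp: j_def C6_le_def)
      obtain w where w: "w \<in> L i \<union> L (Suc i)" "h w = j" using j5 img by (metis imageE)
      have "le w x" using ord w x cj by auto
      moreover have "w \<noteq> x" using w x cj by auto
      ultimately have "r w < r x" using rlt w x by (auto simp: L_def)
      then show False using w x by (auto simp: L_def)
    qed
  qed
  show ?thesis using crown_facts[OF h disj hA hB ord] by blast
qed

lemma card_L: "i \<le> n \<Longrightarrow> card (L i) = 3"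
proof -
  assume "i \<le> n"
  then consider "i < n" | "i = n" by linarith
  then show ?thesis
  proof cases
    case 1 then show ?thesis using crown by blast
  next
    case 2 then have "n - 1 < n" "Suc (n - 1) = i" using n1 by auto
    then show ?thesis using crown[of "n - 1"] by metis
  qed
qed

definition up where "up i x = (THE y. y \<in> L (Suc i) \<and> \<not> le x y)"

lemma up: "i < n \<Longrightarrow> x \<in> L i \<Longrightarrow> up i x \<in> L (Suc i) \<and> \<not> le x (up i x)"
  unfolding up_def by (rule theI') (use crown in blast)

lemma up_uniq: "i < n \<Longrightarrow> x \<in> L i \<Longrightarrow> y \<in> L (Suc i) \<Longrightarrow> \<not> le x y \<Longrightarrow> y = up i x"
  unfolding up_def by (rule the1_equality[symmetric]) (use crown in blast)+

lemma up_other: "i < n \<Longrightarrow> x \<in> L i \<Longrightarrow> x' \<in> L i \<Longrightarrow> x' \<noteq> x \<Longrightarrow> le x' (up i x)"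
proof (rule ccontr)
  assume a: "i < n" "x \<in> L i" "x' \<in> L i" "x' \<noteq> x" "\<not> le x' (up i x)"
  have u: "up i x \<in> L (Suc i)" "\<not> le x (up i x)" using up a by blast+
  then have "\<exists>!z. z \<in> L i \<and> \<not> le z (up i x)" using crown a(1) by blast
  then show False using a u by blast
qed

lemma up_surj: "i < n \<Longrightarrow> y \<in> L (Suc i) \<Longrightarrow> \<exists>x\<in>L i. y = up i x"
proof -
  assume a: "i < n" "y \<in> L (Suc i)"
  then obtain x where "x \<in> L i" "\<not> le x y" using crown by blast
  then show ?thesis using up_uniq a by blast
qed

lemma above:
  assumes "x \<in> P" "w \<in> L i" "i + 2 \<le> r x"
  shows "le w x"
proof -
  obtain v where v: "v \<in> P" "le v x" "r v = i + 2" using down assms by blast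
  have sn: "Suc i < n" using rn[OF v(1)] v(3) by simp
  have vL: "v \<in> L (Suc (Suc i))" using v by (simp add: L_def)
  obtain y0 where y0: "y0 \<in> L (Suc i)" "v = up (Suc i) y0" using up_surj[OF sn vL] by blast
  obtain y where y: "y \<in> L (Suc i)" "y \<noteq> y0" "y \<noteq> up i w"
    using card3_other[OF card_L[of "Suc i"]] sn by auto
  have "le w y" using up_uniq[of i w y] y assms(2) sn by auto
  moreover have "le y v" using up_other[OF sn y0(1) y(1) y(2)] y0(2) by simp
  moreover have "w \<in> P" "y \<in> P" using assms(2) y(1) LP by auto
  ultimately show ?thesis using trans[of w y v] trans[of w v x] v assms(1) by blast
qed

end



locale Setup = S6 +
  fixes Q :: "'a set" and f :: "'a \<Rightarrow> 'a" and g :: "'a \<Rightarrow> nat" and k :: nat and a b :: 'a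
  assumes QP: "Q \<subseteq> P" and fQ: "\<And>x. x \<in> P \<Longrightarrow> f x \<in> Q"
    and fmono: "\<And>x y. x \<in> P \<Longrightarrow> y \<in> P \<Longrightarrow> le x y \<Longrightarrow> le (f x) (f y)"
    and ffix: "\<And>q. q \<in> Q \<Longrightarrow> f q = q"
    and gk: "\<And>q. q \<in> Q \<Longrightarrow> g q < k" and blocks: "\<And>i. i < k \<Longrightarrow> card {q\<in>Q. g q = i} = 2"
    and tow: "\<And>x y. x \<in> Q \<Longrightarrow> y \<in> Q \<Longrightarrow> le x y \<longleftrightarrow> (x = y \<or> g x < g y)"
    and aQ: "a \<in> Q" and bQ: "b \<in> Q" and ab: "a \<noteq> b" and ga: "g a = 0" and gb: "g b = 0"
    and ra: "r a = 0" and rb: "r b = 0"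
begin

lemma finQ: "finite Q" using finP QP finite_subset by blast

lemma QinP: "q \<in> Q \<Longrightarrow> q \<in> P" using QP by blast

lemma fP: "x \<in> P \<Longrightarrow> f x \<in> P" using fQ QinP by blast

lemma B0: "q \<in> Q \<Longrightarrow> g q = 0 \<Longrightarrow> q = a \<or> q = b"
proof (rule ccontr)
  assume q: "q \<in> Q" "g q = 0" "\<not> (q = a \<or> q = b)"
  have "card {q\<in>Q. g q = 0} = 2" using blocks gk[OF aQ] ga by auto
  moreover have "{a, b, q} \<subseteq> {q\<in>Q. g q = 0}" using q aQ bQ ga gb by auto
  then have "card {a, b, q} \<le> card {q\<in>Q. g q = 0}" using finQ by (intro card_mono) auto
  moreover have "card {a, b, q} = 3" using q ab by auto
  ultimately show False by simp
qed

lemma partner: "q \<in> Q \<Longrightarrow> \<exists>p\<in>Q. p \<noteq> q \<and> g p = g q"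
proof -
  assume q: "q \<in> Q"
  have "card {p\<in>Q. g p = g q} = 2" using blocks gk[OF q] by auto
  then obtain x y where "x \<noteq> y" "{p\<in>Q. g p = g q} = {x, y}" by (auto simp: card_2_iff)
  then show ?thesis by (metis (mono_tags, lifting) insertI1 insert_commute mem_Collect_eq)
qed

lemma incomp: "p \<in> Q \<Longrightarrow> q \<in> Q \<Longrightarrow> p \<noteq> q \<Longrightarrow> g p = g q \<Longrightarrow> \<not> le p q"
  using tow by auto

lemma above_ab: "w \<in> Q \<Longrightarrow> le a w \<Longrightarrow> le b w \<Longrightarrow> 1 \<le> g w"
proof (rule ccontr)
  assume w: "w \<in> Q" "le a w" "le b w" "\<not> 1 \<le> g w"
  then have "w = a \<or> w = b" using B0 by auto
  then show False using w tow[OF aQ bQ] tow[OF bQ aQ] ab ga gb by auto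
qed

lemma aL: "a \<in> L 0" and bL: "b \<in> L 0" using aQ bQ ra rb QP by (auto simp: L_def)

lemma hi: "w \<in> Q \<Longrightarrow> 1 \<le> g w \<Longrightarrow> le a w \<and> le b w \<and> w \<noteq> a \<and> w \<noteq> b \<and> 1 \<le> r w"
proof -
  assume w: "w \<in> Q" "1 \<le> g w"
  have 1: "le a w" "le b w" using tow[OF aQ w(1)] tow[OF bQ w(1)] w ga gb by auto
  have 2: "w \<noteq> a" "w \<noteq> b" using w ga gb by auto
  have "r a < r w" using rlt[of a w] 1 2 aQ w QP by auto
  then show ?thesis using 1 2 ra by simp
qed

lemma below2: "w \<in> Q \<Longrightarrow> p \<in> Q \<Longrightarrow> q \<in> Q \<Longrightarrow> p \<noteq> q \<Longrightarrow> g p = g q \<Longrightarrow> le w p \<Longrightarrow> le w q \<Longrightarrow> g w < g q"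
  using tow by metis

definition c where "c = (SOME c. c \<in> L 0 \<and> c \<noteq> a \<and> c \<noteq> b)"

lemma c: "c \<in> L 0" "c \<noteq> a" "c \<noteq> b"
proof -
  have "\<exists>c. c \<in> L 0 \<and> c \<noteq> a \<and> c \<noteq> b" using card3_other[OF card_L[of 0]] by auto
  then show "c \<in> L 0" "c \<noteq> a" "c \<noteq> b" unfolding c_def by (metis (mono_tags, lifting) someI_ex)+
qed

lemma L0: "x \<in> L 0 \<Longrightarrow> x = a \<or> x = b \<or> x = c"
proof -
  assume x: "x \<in> L 0"
  have sub: "{a, b, c} \<subseteq> L 0" using aL bL c by auto
  have "card {a, b, c} = 3" using ab c by auto
  moreover have "finite (L 0)" using finP by (auto simp: L_def)
  ultimately have "{a, b, c} = L 0" using card_seteq[OF _ sub] card_L[of 0] by simp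
  then show ?thesis using x by auto
qed

lemma n0: "0 < n" using n1 by simp

definition "ya = up 0 a"
definition "yb = up 0 b"
definition "yc = up 0 c"

lemma yL: "ya \<in> L 1" "yb \<in> L 1" "yc \<in> L 1"
  using up[OF n0 aL] up[OF n0 bL] up[OF n0 c(1)] by (auto simp: ya_def yb_def yc_def)

lemma yrel: "\<not> le a ya" "le b ya" "le c ya" "\<not> le b yb" "le a yb" "le c yb" "\<not> le c yc" "le a yc" "le b yc"
  using up[OF n0 aL] up[OF n0 bL] up[OF n0 c(1)]
    up_other[OF n0 aL bL] up_other[OF n0 aL c(1)] up_other[OF n0 bL aL] up_other[OF n0 bL c(1)]
    up_other[OF n0 c(1) aL] up_other[OF n0 c(1) bL] ab c
  by (auto simp: ya_def yb_def yc_def)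

lemma ydist: "ya \<noteq> yb" "ya \<noteq> yc" "yb \<noteq> yc"
  using yrel by metis+

lemma yP: "ya \<in> P" "yb \<in> P" "yc \<in> P" using yL LP by auto

lemma cP: "c \<in> P" using c LP by auto
lemma aP: "a \<in> P" and bP: "b \<in> P" using aQ bQ QP by auto

lemma H2: "w \<in> P \<Longrightarrow> r w = 1 \<Longrightarrow> le a w \<Longrightarrow> le b w \<Longrightarrow> w = yc"
proof -
  assume w: "w \<in> P" "r w = 1" "le a w" "le b w"
  then have "w \<in> L (Suc 0)" by (simp add: L_def)
  then obtain t where t: "t \<in> L 0" "w = up 0 t" using up_surj[OF n0] by blast
  have "t = a \<or> t = b \<or> t = c" using L0 t by auto
  then show "w = yc" using w t up[OF n0 aL] up[OF n0 bL] by (auto simp: yc_def)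
qed

definition "za = up 1 ya"
definition "zb = up 1 yb"
definition "zc = up 1 yc"

context
  assumes n2: "2 \<le> n"
begin

lemma n1': "1 < n" using n2 by simp

lemma zL: "za \<in> L 2" "zb \<in> L 2" "zc \<in> L 2"
  using up[OF n1' yL(1)] up[OF n1' yL(2)] up[OF n1' yL(3)] by (auto simp: za_def zb_def zc_def numeral_2_eq_2)

lemma zrel: "\<not> le ya za" "le yb za" "le yc za" "\<not> le yb zb" "le ya zb" "le yc zb" "\<not> le yc zc" "le ya zc" "le yb zc"
  using up[OF n1' yL(1)] up[OF n1' yL(2)] up[OF n1' yL(3)]
    up_other[OF n1' yL(1) yL(2)] up_other[OF n1' yL(1) yL(3)] up_other[OF n1' yL(2) yL(1)] up_other[OF n1' yL(2) yL(3)]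
    up_other[OF n1' yL(3) yL(1)] up_other[OF n1' yL(3) yL(2)] ydist
  by (auto simp: za_def zb_def zc_def)

lemma zP: "za \<in> P" "zb \<in> P" "zc \<in> P" using zL LP by auto

lemma Hzc: "z \<in> P \<Longrightarrow> r z = 2 \<Longrightarrow> \<not> le yc z \<Longrightarrow> z = zc"
  using up_uniq[OF n1' yL(3), of z] by (auto simp: L_def zc_def numeral_2_eq_2)

end

lemma Htwo:
  assumes p: "p \<in> P" "2 \<le> r p" and y: "y1 \<in> L 1" "y2 \<in> L 1" "y1 \<noteq> y2"
  shows "le y1 p \<or> le y2 p"
proof (cases "3 \<le> r p")
  case True
  then show ?thesis using above[OF p(1) y(1)] by simp
next
  case False
  then have "r p = 2" using p by simp
  then have pL: "p \<in> L (Suc 1)" using p by (simp add: L_def)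
  have "1 < n" using rn[OF p(1)] p by simp
  then obtain w where w: "w \<in> L 1" "p = up 1 w" using up_surj pL by blast
  show ?thesis
  proof (cases "y1 = w")
    case True
    then show ?thesis using up_other[OF \<open>1 < n\<close> w(1) y(2)] y(3) w(2) by auto
  next
    case False
    then show ?thesis using up_other[OF \<open>1 < n\<close> w(1) y(1)] w(2) by auto
  qed
qed

lemma CORE: "\<not> (g (f ya) = 0 \<and> g (f yb) = 0)"
proof
  assume h: "g (f ya) = 0 \<and> g (f yb) = 0"
  have fa: "f ya \<in> Q" "f yb \<in> Q" "f c \<in> Q" using fQ yP cP by auto
  have l1: "le b (f ya)" "le a (f yb)" "le (f c) (f ya)" "le (f c) (f yb)"
    using fmono[OF bP yP(1) yrel(2)] fmono[OF aP yP(2) yrel(5)] fmono[OF cP yP(1) yrel(3)]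
      fmono[OF cP yP(2) yrel(6)] ffix[OF aQ] ffix[OF bQ] by auto
  have "f ya = a \<or> f ya = b" "f yb = a \<or> f yb = b" using B0 fa h by auto
  then have e: "f ya = b" "f yb = a" using l1 tow[OF bQ aQ] tow[OF aQ bQ] ab ga gb by auto
  have "f c = b" using l1(3) e tow[OF fa(3) bQ] gb by auto
  moreover have "f c = a" using l1(4) e tow[OF fa(3) aQ] ga by auto
  ultimately show False using ab by simp
qed

lemma mid:
  assumes w: "w \<in> Q" "1 \<le> g w" and q: "q \<in> Q" "g w < g q" "r q \<le> 2"
  shows False
proof -
  obtain w' where w': "w' \<in> Q" "w' \<noteq> w" "g w' = g w" using partner[OF w(1)] by blast
  have "v = yc" if v: "v \<in> Q" "g v = g w" for v
  proof -
    have h: "le a v \<and> le b v \<and> v \<noteq> a \<and> v \<noteq> b \<and> 1 \<le> r v" using hi v w by auto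
    have "le v q" "v \<noteq> q" using tow[OF v(1) q(1)] v q by auto
    then have "r v < r q" using rlt v q QP by auto
    then have "r v = 1" using h q by simp
    then show ?thesis using H2 h v QP by auto
  qed
  then show False using w w' by metis
qed

lemma yabove: "x \<in> P \<Longrightarrow> 3 \<le> r x \<Longrightarrow> le ya x \<and> le yb x \<and> le yc x"
  using above yL by (metis one_plus_numeral semiring_norm(3) add.commute)

lemma fyc_hi: "1 \<le> g (f yc)"
proof -
  have "le a (f yc)" "le b (f yc)" using fmono[OF aP yP(3) yrel(8)] fmono[OF bP yP(3) yrel(9)]
    ffix[OF aQ] ffix[OF bQ] by auto
  then show ?thesis using above_ab fQ yP by auto
qed

end



context Setup
begin

lemma low:
  assumes t: "t \<in> P" and pq: "p \<in> Q" "q \<in> Q" "p \<noteq> q" "g p = g q" "r p \<le> 2"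
    and le1: "le (f t) q" and le2: "le (f t) p"
  shows "g (f t) = 0"
proof (rule ccontr)
  assume "g (f t) \<noteq> 0"
  then have h1: "1 \<le> g (f t)" by simp
  have tQ: "f t \<in> Q" using fQ t by auto
  have "g (f t) < g q" using below2[OF tQ pq(1,2,3,4)] le1 le2 by auto
  then show False using mid[OF tQ h1 pq(1)] pq by simp
qed

lemma M:
  assumes x: "x \<in> P" "3 \<le> r x"
  shows "3 \<le> r (f x)"
proof (rule ccontr)
  assume nq: "\<not> 3 \<le> r (f x)"
  have n3: "3 \<le> n" using rn[OF x(1)] x by simp
  then have n2: "2 \<le> n" by simp
  define q where "q = f x"
  have qQ: "q \<in> Q" and qP: "q \<in> P" using fQ fP x q_def by auto
  have yx: "le ya x" "le yb x" "le yc x" using yabove x by auto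
  have fy: "le (f ya) q" "le (f yb) q" "le (f yc) q" using fmono yP x yx q_def by auto
  have fyQ: "f ya \<in> Q" "f yb \<in> Q" "f yc \<in> Q" using fQ yP by auto
  have gyc: "1 \<le> g (f yc)" by (rule fyc_hi)
  have "le a (f yc)" "le b (f yc)" using hi fyQ gyc by auto
  then have "le a q" "le b q" using trans[of a "f yc" q] trans[of b "f yc" q] fy aP bP fyQ QP qP by auto
  then have gq: "1 \<le> g q" using above_ab qQ by auto
  then have rq1: "1 \<le> r q" using hi qQ by auto
  obtain p where p: "p \<in> Q" "p \<noteq> q" "g p = g q" using partner[OF qQ] by blast
  have pP: "p \<in> P" using p QP by auto
  have hp: "le a p \<and> le b p \<and> p \<noteq> a \<and> p \<noteq> b \<and> 1 \<le> r p" using hi p gq by auto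
  have npq: "\<not> le q p" "\<not> le p q" using incomp p qQ by auto
  have fp: "f p = p" using ffix p by auto
  have "r q = 1 \<or> r q = 2" using rq1 nq q_def by auto
  then show False
  proof
    assume rq: "r q = 1"
    have qyc: "q = yc" using H2 qP rq \<open>le a q\<close> \<open>le b q\<close> by auto
    have "r p \<noteq> 1" using H2 pP hp qyc p(2) by auto
    moreover have "\<not> 3 \<le> r p" using yabove[OF pP] npq(1) qyc by auto
    ultimately have rp: "r p = 2" using hp by auto
    have pzc: "p = zc" using Hzc[OF n2, of p] pP rp npq(1) qyc by auto
    have "le (f ya) p" "le (f yb) p" using fmono[of ya zc] fmono[of yb zc] zrel[OF n2] yP zP[OF n2] pzc fp by auto
    then have "g (f ya) = 0" "g (f yb) = 0"
      using low[OF yP(1) p(1) qQ p(2,3)] low[OF yP(2) p(1) qQ p(2,3)] rp fy by auto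
    then show False using CORE by simp
  next
    assume rq: "r q = 2"
    have fycq: "f yc = q"
    proof (rule ccontr)
      assume "f yc \<noteq> q"
      then have "g (f yc) < g q" using tow[OF fyQ(3) qQ] fy by auto
      then show False using mid[OF fyQ(3) gyc qQ] rq by simp
    qed
    have "f t = q \<or> g (f t) = 0" if t: "t \<in> P" "le (f t) q" for t
    proof (rule ccontr)
      assume h: "\<not> (f t = q \<or> g (f t) = 0)"
      have tQ: "f t \<in> Q" using fQ t by auto
      have "g (f t) < g q" using tow[OF tQ qQ] t h by auto
      then show False using mid[OF tQ _ qQ] rq h by simp
    qed
    then have "f ya = q \<or> f yb = q" using CORE fy yP by blast
    then obtain t where t: "t \<in> L 1" "t \<noteq> yc" "f t = q" using yL ydist by metis
    have tP: "t \<in> P" using t LP by auto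
    have "r p \<noteq> 1" using H2 pP hp fycq fp p(2) by auto
    then have "2 \<le> r p" using hp by simp
    then have "le yc p \<or> le t p" using Htwo[OF pP _ yL(3) t(1)] t by auto
    then have "le q p" using fmono[OF yP(3) pP] fmono[OF tP pP] fycq t fp by auto
    then show False using npq by simp
  qed
qed

lemma U:
  assumes q: "q \<in> Q" "3 \<le> r q" and p: "p \<in> Q" "p \<noteq> q" "g p = g q"
  shows "3 \<le> r p"
proof (rule ccontr)
  assume np: "\<not> 3 \<le> r p"
  have qP: "q \<in> P" and pP: "p \<in> P" using q p QP by auto
  have n3: "3 \<le> n" using rn[OF qP] q by simp
  then have n2: "2 \<le> n" by simp
  have "g q \<noteq> 0" using B0[OF q(1)] q ra rb by force
  then have gq: "1 \<le> g q" by simp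
  have hp: "le a p \<and> le b p \<and> p \<noteq> a \<and> p \<noteq> b \<and> 1 \<le> r p" using hi p gq by auto
  have npq: "\<not> le q p" "\<not> le p q" using incomp p q by auto
  have fp: "f p = p" and fq: "f q = q" using ffix p q by auto
  have "r p \<noteq> 1" using H2 pP hp yabove[OF qP] q npq by auto
  then have rp: "r p = 2" using np hp by simp
  have yq: "le ya q" "le yb q" "le yc q" using yabove qP q by auto
  have fy: "le (f ya) q" "le (f yb) q" "le (f yc) q"
    using fmono[OF yP(1) qP yq(1)] fmono[OF yP(2) qP yq(2)] fmono[OF yP(3) qP yq(3)] fq by auto
  have fyQ: "f ya \<in> Q" "f yb \<in> Q" "f yc \<in> Q" using fQ yP by auto
  have fycq: "f yc = q"
  proof (rule ccontr)
    assume "f yc \<noteq> q"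
    then have "g (f yc) < g p" using tow[OF fyQ(3) q(1)] fy p by auto
    then show False using mid[OF fyQ(3) fyc_hi p(1)] rp by simp
  qed
  have "\<not> le yc p" using fmono[OF yP(3) pP] fycq fp npq by auto
  then have pzc: "p = zc" using Hzc[OF n2] pP rp by auto
  have "le (f ya) p" "le (f yb) p" using fmono[of ya zc] fmono[of yb zc] zrel[OF n2] yP zP[OF n2] pzc fp by auto
  then have "g (f ya) = 0" "g (f yb) = 0"
    using low[OF yP(1) p(1) q(1) p(2,3)] low[OF yP(2) p(1) q(1) p(2,3)] rp fy by auto
  then show False using CORE by simp
qed

lemma N: "3 \<le> n"
proof (rule ccontr)
  assume nn: "\<not> 3 \<le> n"
  define u where "u = f yc"
  have uQ: "u \<in> Q" using fQ yP u_def by auto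
  have gu: "1 \<le> g u" using fyc_hi u_def by simp
  obtain p where p: "p \<in> Q" "p \<noteq> u" "g p = g u" using partner[OF uQ] by blast
  have pP: "p \<in> P" using p QP by auto
  have hp: "le a p \<and> le b p \<and> p \<noteq> a \<and> p \<noteq> b \<and> 1 \<le> r p" using hi p gu by auto
  have npq: "\<not> le u p" "\<not> le p u" using incomp p uQ by auto
  have fp: "f p = p" using ffix p by auto
  have "r p \<noteq> 1" using H2 pP hp fp p(2) u_def by auto
  moreover have "r p \<le> n" using rn pP by auto
  ultimately have rp: "r p = 2" and n2: "2 \<le> n" and nn2: "n = 2" using hp nn by auto
  have "\<not> le yc p" using fmono[OF yP(3) pP] fp npq u_def by auto
  then have pzc: "p = zc" using Hzc[OF n2] pP rp by auto
  have fz: "f z = u" if z: "z \<in> P" "le yc z" for z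
  proof (rule ccontr)
    assume ne: "f z \<noteq> u"
    have zQ: "f z \<in> Q" using fQ z by auto
    have "le u (f z)" using fmono[OF yP(3) z(1) z(2)] u_def by simp
    then have "g u < g (f z)" using tow[OF uQ zQ] ne by auto
    then have "le p (f z)" "p \<noteq> f z" using tow[OF p(1) zQ] p by auto
    then have "r p < r (f z)" using rlt pP fP z by auto
    then show False using rn[OF fP[OF z(1)]] rp nn2 by simp
  qed
  have "f za = u" "f zb = u" using fz zP[OF n2] zrel[OF n2] by auto
  then have "le (f yb) u" "le (f ya) u" using fmono[of yb za] fmono[of ya zb] zrel[OF n2] yP zP[OF n2] by auto
  moreover have "le (f ya) p" "le (f yb) p" using fmono[of ya zc] fmono[of yb zc] zrel[OF n2] yP zP[OF n2] pzc fp by auto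
  ultimately have "g (f ya) = 0" "g (f yb) = 0"
    using low[OF yP(1) p(1) uQ p(2,3)] low[OF yP(2) p(1) uQ p(2,3)] rp by auto
  then show False using CORE by simp
qed

end



context Setup
begin

lemma final: "3 \<le> n \<and> (\<exists>R. retract (levels P le 3 n) le R \<and> four_tower R le)"
proof -
  have n3: "3 \<le> n" by (rule N)
  define LV where "LV = levels P le 3 n"
  define R where "R = Q \<inter> LV"
  have LVi: "x \<in> LV \<longleftrightarrow> x \<in> P \<and> 3 \<le> r x \<and> r x \<le> n" for x by (simp add: LV_def levels_def)
  have fLV: "f x \<in> R" if "x \<in> LV" for x
    using that M[of x] fQ[of x] fP[of x] rn[of "f x"] by (auto simp: R_def LVi)
  have ret: "retract LV le R"
    unfolding retract_def
  proof (intro conjI exI[of _ f])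
    show "R \<subseteq> LV" by (auto simp: R_def)
    show "f ` LV \<subseteq> R" using fLV by auto
    show "\<forall>x\<in>LV. \<forall>y\<in>LV. le x y \<longrightarrow> le (f x) (f y)" using fmono by (auto simp: LVi)
    show "\<forall>q\<in>R. f q = q" using ffix by (auto simp: R_def)
  qed
  have "L 3 \<noteq> {}" using card_L[OF n3] by auto
  then obtain x where x: "x \<in> L 3" by auto
  then have "x \<in> LV" using n3 by (auto simp: LVi L_def)
  then have Rne: "R \<noteq> {}" using fLV by auto
  have finR: "finite R" using finQ by (auto simp: R_def)
  define j0 where "j0 = Min (g ` R)"
  have "j0 \<in> g ` R" using finR Rne by (simp add: j0_def)
  then obtain q0 where q0: "q0 \<in> R" "g q0 = j0" by auto
  have j0le: "j0 \<le> g q" if "q \<in> R" for q using finR that by (simp add: j0_def)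
  have q0Q: "q0 \<in> Q" and q0P: "q0 \<in> P" and rq0: "3 \<le> r q0" using q0 QP by (auto simp: R_def LVi)
  have inR: "q \<in> R" if q: "q \<in> Q" "j0 \<le> g q" for q
  proof -
    have qP: "q \<in> P" using q QP by auto
    have "3 \<le> r q"
    proof (cases "g q = j0")
      case True
      then show ?thesis
      proof (cases "q = q0")
        case True then show ?thesis using rq0 by simp
      next
        case False then show ?thesis using U[OF q0Q rq0 q(1)] q0 \<open>g q = j0\<close> by auto
      qed
    next
      case False
      then have "g q0 < g q" using q q0 by auto
      then have "le q0 q" "q0 \<noteq> q" using tow[OF q0Q q(1)] by auto
      then show ?thesis using rlt[OF q0P qP] rq0 by auto
    qed
    then show ?thesis using q qP rn[OF qP] by (auto simp: R_def LVi)
  qed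
  have RQ: "R \<subseteq> Q" by (auto simp: R_def)
  have tw: "four_tower R le"
    unfolding four_tower_def
  proof (intro exI[of _ "k - j0"] exI[of _ "\<lambda>q. g q - j0"] conjI ballI allI impI)
    show "1 \<le> k - j0" using gk[OF q0Q] q0 by simp
    show "(\<lambda>q. g q - j0) ` R \<subseteq> {0..<k - j0}"
    proof
      fix v assume "v \<in> (\<lambda>q. g q - j0) ` R"
      then obtain q where q: "q \<in> R" "v = g q - j0" by blast
      have "g q < k" using gk q RQ by blast
      then show "v \<in> {0..<k - j0}" using q j0le[OF q(1)] by simp
    qed
    fix i assume i: "i < k - j0"
    have "{q \<in> R. g q - j0 = i} = {q \<in> Q. g q = i + j0}"
    proof (intro set_eqI iffI)
      fix q assume "q \<in> {q \<in> R. g q - j0 = i}"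
      then show "q \<in> {q \<in> Q. g q = i + j0}" using RQ j0le by auto
    next
      fix q assume q: "q \<in> {q \<in> Q. g q = i + j0}"
      then have "q \<in> R" using inR by simp
      then show "q \<in> {q \<in> R. g q - j0 = i}" using q by simp
    qed
    then show "card {q \<in> R. g q - j0 = i} = 2" using blocks[of "i + j0"] i by simp
  next
    fix x y assume xy: "x \<in> R" "y \<in> R"
    show "le x y \<longleftrightarrow> (x = y \<or> g x - j0 < g y - j0)"
    proof -
      have "x \<in> Q" "y \<in> Q" using xy RQ by auto
      then have "le x y \<longleftrightarrow> (x = y \<or> g x < g y)" using tow by blast
      moreover have "g x < g y \<longleftrightarrow> g x - j0 < g y - j0" using j0le[OF xy(1)] j0le[OF xy(2)] by auto
      ultimately show ?thesis by simp
    qed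
  qed
  have "retract (levels P le 3 n) le R" using ret by (simp add: LV_def)
  then show ?thesis using n3 tw by (intro conjI exI[of _ R]) simp_all
qed

end

theorem lemma5p8:
  fixes P Q :: "'a set" and le :: "'a \<Rightarrow> 'a \<Rightarrow> bool" and n :: nat
  assumes "six_stack P le n"
    and "retract P le Q"
    and "four_tower Q le"
    and "card (levels P le 0 0 \<inter> levels Q le 0 0) = 2"
  shows "n \<ge> 3 \<and> (\<exists>R. retract (levels P le 3 n) le R \<and> four_tower R le)"
proof -
  interpret S6 P le n by unfold_locales (rule assms(1))
  have R2: "Q \<subseteq> P \<and> (\<exists>f. f ` P \<subseteq> Q \<and> (\<forall>x\<in>P. \<forall>y\<in>P. le x y \<longrightarrow> le (f x) (f y)) \<and> (\<forall>q\<in>Q. f q = q))"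
    using assms(2) unfolding retract_def .
  then have "\<exists>f. f ` P \<subseteq> Q \<and> (\<forall>x\<in>P. \<forall>y\<in>P. le x y \<longrightarrow> le (f x) (f y)) \<and> (\<forall>q\<in>Q. f q = q)"
    by (rule conjunct2)
  then obtain f where f0: "f ` P \<subseteq> Q \<and> (\<forall>x\<in>P. \<forall>y\<in>P. le x y \<longrightarrow> le (f x) (f y)) \<and> (\<forall>q\<in>Q. f q = q)"
    by (elim exE) (rule that)
  have f: "Q \<subseteq> P" "f ` P \<subseteq> Q" "\<forall>x\<in>P. \<forall>y\<in>P. le x y \<longrightarrow> le (f x) (f y)" "\<forall>q\<in>Q. f q = q"
    using R2 f0 by simp_all
  have T2: "\<exists>k::nat. \<exists>g. k \<ge> 1 \<and> g ` Q \<subseteq> {0..<k} \<and> (\<forall>i<k. card {q\<in>Q. g q = i} = 2) \<and>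
     (\<forall>x\<in>Q. \<forall>y\<in>Q. le x y \<longleftrightarrow> (x = y \<or> g x < g y))"
    using assms(3) unfolding four_tower_def .
  then obtain k :: nat and g where t0: "k \<ge> 1 \<and> g ` Q \<subseteq> {0..<k} \<and> (\<forall>i<k. card {q\<in>Q. g q = i} = 2) \<and>
     (\<forall>x\<in>Q. \<forall>y\<in>Q. le x y \<longleftrightarrow> (x = y \<or> g x < g y))"
    by (elim exE) (rule that)
  have t: "k \<ge> 1" "g ` Q \<subseteq> {0..<k}" "\<forall>i<k. card {q\<in>Q. g q = i} = 2"
    "\<forall>x\<in>Q. \<forall>y\<in>Q. le x y \<longleftrightarrow> (x = y \<or> g x < g y)"
    using t0 by simp_all
  have "\<exists>a b. levels P le 0 0 \<inter> levels Q le 0 0 = {a, b} \<and> a \<noteq> b"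
    using assms(4) unfolding card_2_iff .
  then obtain a b where ab0: "levels P le 0 0 \<inter> levels Q le 0 0 = {a, b} \<and> a \<noteq> b"
    by (elim exE) (rule that)
  have ab: "a \<noteq> b" "levels P le 0 0 \<inter> levels Q le 0 0 = {a, b}" using ab0 by simp_all
  have finQ: "finite Q" using f(1) finP finite_subset by blast
  have g0: "g x = 0" if x: "x \<in> Q" "prank Q le x = 0" for x
  proof (rule ccontr)
    assume gx: "g x \<noteq> 0"
    have "0 < k" using t(1) by simp
    then have "card {q\<in>Q. g q = 0} = 2" using t(3) by blast
    then have "{q\<in>Q. g q = 0} \<noteq> {}" by (metis card.empty zero_neq_numeral)
    then obtain w where w: "w \<in> Q" "g w = 0" by blast
    have "le w x" "w \<noteq> x" using t(4) w x gx by auto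
    then have "sorted_wrt (strict le) [w, x]" by (simp add: strict_def)
    then have "1 \<le> prank Q le x" using prank_ge[OF finQ, where xs="[w, x]" and m=1 and le=le and p=x] w x by auto
    then show False using x by simp
  qed
  have aL: "a \<in> levels P le 0 0" "a \<in> levels Q le 0 0" "b \<in> levels P le 0 0" "b \<in> levels Q le 0 0"
    using ab(2) by blast+
  have aa: "a \<in> Q" "prank Q le a = 0" "prank P le a = 0" "b \<in> Q" "prank Q le b = 0" "prank P le b = 0"
    using aL unfolding levels_def by auto
  have gab: "g a = 0" "g b = 0" using g0 aa by auto
  interpret Setup P le n Q f g k a b
  proof unfold_locales
    show "Q \<subseteq> P" by (rule f(1))
    show "\<And>x. x \<in> P \<Longrightarrow> f x \<in> Q" using f(2) by blast
    show "\<And>x y. x \<in> P \<Longrightarrow> y \<in> P \<Longrightarrow> le x y \<Longrightarrow> le (f x) (f y)" using f(3) by blast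
    show "\<And>q. q \<in> Q \<Longrightarrow> f q = q" using f(4) by blast
    show "\<And>q. q \<in> Q \<Longrightarrow> g q < k" using t(2) by auto
    show "\<And>i. i < k \<Longrightarrow> card {q \<in> Q. g q = i} = 2" using t(3) by blast
    show "\<And>x y. x \<in> Q \<Longrightarrow> y \<in> Q \<Longrightarrow> le x y = (x = y \<or> g x < g y)" using t(4) by blast
    show "a \<in> Q" "b \<in> Q" "a \<noteq> b" "g a = 0" "g b = 0" "prank P le a = 0" "prank P le b = 0"
      using aa gab ab(1) by auto
  qed
  show ?thesis using final by simp
qed

end
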